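(* Let $X$ be a $T_1$ space and $\mathcal{P}$ an ideal of closed subsets of $X$ containing every singleton subset of $X$. Then $C(X)_\mathcal{P}$ is an Artinian ring if and only if $X$ is finite.
   Context: An ideal of closed subsets of $X$ is a family $\mathcal{P}$ of closed subsets closed under finite unions and under passing to closed subsets. $D_f$ is the set of discontinuity points of $f\in\mathbb{R}^X$; $C(X)_\mathcal{P}=\{f\in\mathbb{R}^X\colon\overline{D_f}\in\mathcal{P}\}$ with pointwise operations. *)

theory Defs
  imports "HOL-Analysis.Analysis" "HOL-Algebra.Ring_Divisibility"
begin

definition closed_ideal :: "'a::topological_space set set \<Rightarrow> bool" where
  "closed_ideal P \<longleftrightarrow>
     (\<forall>A\<in>P. closed A) \<and> {} \<in> P \<and>
     (\<forall>A\<in>P. \<forall>B\<in>P. A \<union> B \<in> P) \<and>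
     (\<forall>A\<in>P. \<forall>B. closed B \<and> B \<subseteq> A \<longrightarrow> B \<in> P)"

definition discont :: "('a::topological_space \<Rightarrow> real) \<Rightarrow> 'a set" where
  "discont f = {x. \<not> (f \<longlongrightarrow> f x) (at x)}"

definition CP :: "'a::topological_space set set \<Rightarrow> ('a \<Rightarrow> real) ring" where
  "CP P = \<lparr>carrier = {f. closure (discont f) \<in> P},
           monoid.mult = (\<lambda>f g x. f x * g x),
           one = (\<lambda>x. 1),
           zero = (\<lambda>x. 0),
           add = (\<lambda>f g x. f x + g x)\<rparr>"

definition artinian_ring :: "('a, 'b) ring_scheme \<Rightarrow> bool" where
  "artinian_ring R \<longleftrightarrow> ring R \<and>
     (\<forall>I :: nat \<Rightarrow> 'a set. (\<forall>n. ideal (I n) R) \<and> (\<forall>n. I (Suc n) \<subseteq> I n)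
        \<longrightarrow> (\<exists>N. \<forall>n\<ge>N. I n = I N))"

end

theory Submission
  imports Defs
begin

lemma CP_simps:
  "carrier (CP P) = {f. closure (discont f) \<in> P}"
  "f \<otimes>\<^bsub>CP P\<^esub> g = (\<lambda>x. f x * g x)"
  "f \<oplus>\<^bsub>CP P\<^esub> g = (\<lambda>x. f x + g x)"
  "\<one>\<^bsub>CP P\<^esub> = (\<lambda>x. 1)"
  "\<zero>\<^bsub>CP P\<^esub> = (\<lambda>x. 0)"
  by (simp_all add: CP_def)

lemma finite_discont:
  assumes "finite (UNIV :: 'a::t1_space set)"
  shows "discont (f :: 'a \<Rightarrow> real) = {}"
proof -
  have "open {x}" for x :: 'a
  proof -
    have "closed (UNIV - {x})" using assms by (simp add: finite_imp_closed)
    moreover have "{x} = - (UNIV - {x})" by auto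
    ultimately show ?thesis by (metis open_Compl)
  qed
  then have "at x = bot" for x :: 'a by (simp add: at_eq_bot_iff)
  then show ?thesis unfolding discont_def by auto
qed

lemma finite_carrier:
  assumes "closed_ideal P" "finite (UNIV :: 'a::t1_space set)"
  shows "carrier (CP (P :: 'a set set)) = UNIV"
  using assms finite_discont[OF assms(2)] by (auto simp: CP_simps closed_ideal_def)

lemma finite_ring:
  assumes "closed_ideal P" "finite (UNIV :: 'a::t1_space set)"
  shows "ring (CP (P :: 'a set set))"
proof (rule ringI)
  note C = finite_carrier[OF assms]
  show "abelian_group (CP P)"
    apply (rule abelian_groupI)
    apply (simp_all add: C CP_simps(2-5) algebra_simps)
    apply (rule_tac x="\<lambda>z. - x z" in exI)
    apply simp
    done
  show "monoid (CP P)"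
    by (rule monoidI) (simp_all add: C CP_simps(2-5) algebra_simps)
qed (simp_all add: CP_simps algebra_simps)

lemma support_in_ideal:
  assumes I: "ideal I (CP P)" and C: "carrier (CP P) = UNIV" and F: "finite F"
  shows "F \<subseteq> {x. \<exists>g\<in>I. g x \<noteq> 0} \<Longrightarrow> (\<forall>y. f y \<noteq> 0 \<longrightarrow> y \<in> F) \<Longrightarrow> f \<in> I"
  using F
proof (induction F arbitrary: f rule: finite_induct)
  case empty
  then have "f = \<zero>\<^bsub>CP P\<^esub>" by (auto simp: CP_simps)
  then show ?case using I by (simp add: additive_subgroup.zero_closed ideal.axioms(1))
next
  case (insert x F)
  obtain g where g: "g \<in> I" "g x \<noteq> 0" using insert.prems by auto
  define h where "h = (\<lambda>y. if y = x then 0 else f y)"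
  have hI: "h \<in> I" using insert by (intro insert.IH) (auto simp: h_def)
  define c where "c = (\<lambda>y. if y = x then f x / g x else 0)"
  have "c \<otimes>\<^bsub>CP P\<^esub> g \<in> I" using I g C by (intro ideal.I_l_closed) auto
  then have "h \<oplus>\<^bsub>CP P\<^esub> (c \<otimes>\<^bsub>CP P\<^esub> g) \<in> I"
    using hI I by (meson additive_subgroup.a_closed ideal.axioms(1))
  moreover have "h \<oplus>\<^bsub>CP P\<^esub> (c \<otimes>\<^bsub>CP P\<^esub> g) = f"
    using g by (auto simp: CP_simps h_def c_def)
  ultimately show ?case by simp
qed


lemma indicator_single_carrier:
  assumes "closed_ideal P" "\<And>x. {x} \<in> P"
  shows "(\<lambda>y. if y = x then 1 else 0) \<in> carrier (CP (P :: 'a::t1_space set set))"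
proof -
  let ?e = "(\<lambda>y::'a. if y = x then 1 else (0::real))"
  have "discont ?e \<subseteq> {x}"
  proof
    fix y assume y: "y \<in> discont ?e"
    show "y \<in> {x}"
    proof (rule ccontr)
      assume "y \<notin> {x}"
      then have "open (- {x})" "y \<in> - {x}" by auto
      then have "\<forall>\<^sub>F z in at y. ?e z = ?e y"
        using \<open>y \<notin> {x}\<close> by (auto simp: eventually_at_topological)
      then have "(?e \<longlongrightarrow> ?e y) (at y)" by (simp add: tendsto_eventually)
      with y show False by (simp add: discont_def)
    qed
  qed
  then have "closure (discont ?e) \<subseteq> {x}" by (simp add: closure_minimal)
  then show ?thesis using assms unfolding closed_ideal_def
    by (simp add: CP_simps) (metis closed_closure)
qed

theorem corollary5p10:
  fixes P :: "'a::t1_space set set"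
  assumes "closed_ideal P"
    and "\<And>x. {x} \<in> P"
  shows "artinian_ring (CP P) \<longleftrightarrow> finite (UNIV :: 'a set)"
proof
  assume A: "artinian_ring (CP P)"
  then have R: "ring (CP P)" by (simp add: artinian_ring_def)
  show "finite (UNIV :: 'a set)"
  proof (rule ccontr)
    assume "infinite (UNIV :: 'a set)"
    then obtain x :: "nat \<Rightarrow> 'a" where x: "inj x" using infinite_countable_subset by blast
    define I where "I n = {f \<in> carrier (CP P). \<forall>i<n. f (x i) = 0}" for n
    have idl: "ideal (I n) (CP P)" for n
    proof (rule idealI[OF R])
      show "subgroup (I n) (add_monoid (CP P))"
      proof (rule subgroup.intro)
        show "I n \<subseteq> carrier (add_monoid (CP P))" by (auto simp: I_def)
        show "a \<otimes>\<^bsub>add_monoid (CP P)\<^esub> b \<in> I n" if "a \<in> I n" "b \<in> I n" for a b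
          using that ring.ring_simprules(1)[OF R, of a b] by (auto simp: I_def CP_simps(3))
        show "\<one>\<^bsub>add_monoid (CP P)\<^esub> \<in> I n"
          using ring.ring_simprules(2)[OF R] by (auto simp: I_def CP_simps(5))
        show "inv\<^bsub>add_monoid (CP P)\<^esub> a \<in> I n" if "a \<in> I n" for a
        proof -
          have a: "a \<in> carrier (CP P)" using that by (simp add: I_def)
          have "\<ominus>\<^bsub>CP P\<^esub> a \<oplus>\<^bsub>CP P\<^esub> a = \<zero>\<^bsub>CP P\<^esub>" using ring.ring_simprules(9)[OF R a] .
          then have e: "(\<lambda>z. (\<ominus>\<^bsub>CP P\<^esub> a) z + a z) = (\<lambda>z. 0)" by (simp add: CP_simps(3,5))
          have "\<And>z. (\<ominus>\<^bsub>CP P\<^esub> a) z + a z = 0" using fun_cong[OF e] by simp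
          then have "\<And>z. (\<ominus>\<^bsub>CP P\<^esub> a) z = - a z" by (simp add: eq_neg_iff_add_eq_0)
          then have "\<ominus>\<^bsub>CP P\<^esub> a \<in> I n" using that ring.ring_simprules(3)[OF R a]
            by (auto simp: I_def)
          then show ?thesis by (simp add: a_inv_def)
        qed
      qed
      show "y \<otimes>\<^bsub>CP P\<^esub> a \<in> I n" if "a \<in> I n" "y \<in> carrier (CP P)" for a y
        using that ring.ring_simprules(5)[OF R, of y a] by (auto simp: I_def CP_simps(2))
      show "a \<otimes>\<^bsub>CP P\<^esub> y \<in> I n" if "a \<in> I n" "y \<in> carrier (CP P)" for a y
        using that ring.ring_simprules(5)[OF R, of a y] by (auto simp: I_def CP_simps(2))
    qed
    have dec: "I (Suc n) \<subseteq> I n" for n by (auto simp: I_def)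
    have ch: "(\<forall>n. ideal (I n) (CP P)) \<and> (\<forall>n. I (Suc n) \<subseteq> I n)"
      using idl dec by blast
    have "\<exists>N. \<forall>n\<ge>N. I n = I N"
      using mp[OF spec[OF conjunct2[OF A[unfolded artinian_ring_def]], of I] ch] .
    then obtain N where N: "\<forall>n\<ge>N. I n = I N" by blast
    let ?e = "(\<lambda>y. if y = x N then 1 else (0::real))"
    have ec: "?e \<in> carrier (CP P)" using indicator_single_carrier[OF assms, of "x N"] .
    have "\<forall>i<N. ?e (x i) = 0" by (simp add: inj_eq[OF x])
    with ec have "?e \<in> I N" unfolding I_def by blast
    moreover have "\<not> (\<forall>i<Suc N. ?e (x i) = 0)" using lessI[of N] by force
    then have "?e \<notin> I (Suc N)" unfolding I_def by blast
    ultimately show False using N[rule_format, of "Suc N"] by simp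
  qed
next
  assume fin: "finite (UNIV :: 'a set)"
  note C = finite_carrier[OF assms(1) fin]
  show "artinian_ring (CP P)"
    unfolding artinian_ring_def
  proof (intro conjI allI impI)
    show "ring (CP P)" by (rule finite_ring[OF assms(1) fin])
    fix I :: "nat \<Rightarrow> ('a \<Rightarrow> real) set"
    assume "(\<forall>n. ideal (I n) (CP P)) \<and> (\<forall>n. I (Suc n) \<subseteq> I n)"
    then have idl: "\<And>n. ideal (I n) (CP P)" and dec: "\<And>n. I (Suc n) \<subseteq> I n" by auto
    have mono: "m \<le> n \<Longrightarrow> I n \<subseteq> I m" for m n
      using lift_Suc_antimono_le[of I, OF dec] by blast
    define S where "S n = {x. \<exists>g\<in>I n. g x \<noteq> 0}" for n
    obtain N where Nmin: "\<And>n. card (S N) \<le> card (S n)"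
      using ex_has_least_nat[of "\<lambda>n. True" 0 "\<lambda>n. card (S n)"] by blast
    show "\<exists>N. \<forall>n\<ge>N. I n = I N"
    proof (intro exI[of _ N] allI impI)
      fix n assume "N \<le> n"
      then have sub: "I n \<subseteq> I N" using mono by blast
      then have "S n \<subseteq> S N" by (auto simp: S_def)
      moreover have "card (S N) \<le> card (S n)" by (rule Nmin)
      ultimately have "S n = S N" using card_seteq[OF finite_subset[OF subset_UNIV fin]] by blast
      have "I N \<subseteq> I n"
      proof
        fix f assume f: "f \<in> I N"
        have fS: "finite (S n)" using finite_subset[OF subset_UNIV fin] .
        have "S n \<subseteq> {x. \<exists>g\<in>I n. g x \<noteq> 0}" by (simp add: S_def)
        moreover have "\<forall>y. f y \<noteq> 0 \<longrightarrow> y \<in> S n"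
        proof (intro allI impI)
          fix y assume "f y \<noteq> 0"
          then have "y \<in> S N" using f unfolding S_def by blast
          then show "y \<in> S n" using \<open>S n = S N\<close> by simp
        qed
        ultimately show "f \<in> I n" using support_in_ideal[OF idl[of n] C fS] by blast
      qed
      with sub show "I n = I N" by blast
    qed
  qed
qed

end
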